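(* Let $\Gamma$ be a group and $S$ a strongly $\Gamma$-graded semigroup with local units. Then (1) $S$ is regular if and only if $S_\varepsilon$ is regular; and (2) $S$ is an inverse semigroup if and only if $S_\varepsilon$ is an inverse semigroup.
   Context: Semigroups have a zero; $S$ is $\Gamma$-graded via $\deg:S\setminus\{0\}\to\Gamma$ with $\deg(st)=\deg(s)\deg(t)$ whenever $st\neq0$; $S_\alpha=\deg^{-1}(\alpha)\cup\{0\}$, $\varepsilon$ the identity of $\Gamma$; strongly graded means $S_\alpha S_\beta=S_{\alpha\beta}$ for all $\alpha,\beta$. $S$ has local units if for each $s$ there are idempotents $u,v$ with $us=s=sv$. Regular: every $s$ has $t$ with $sts=s$. *)

theory Defs
  imports "HOL-Algebra.Group"
begin

definition semigroup0 :: "'a set \<Rightarrow> ('a \<Rightarrow> 'a \<Rightarrow> 'a) \<Rightarrow> 'a \<Rightarrow> bool" where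
  "semigroup0 S m z \<longleftrightarrow>
     (\<forall>s\<in>S. \<forall>t\<in>S. m s t \<in> S) \<and>
     (\<forall>s\<in>S. \<forall>t\<in>S. \<forall>u\<in>S. m (m s t) u = m s (m t u)) \<and>
     z \<in> S \<and> (\<forall>s\<in>S. m z s = z \<and> m s z = z)"

definition graded :: "('g, 'b) monoid_scheme \<Rightarrow> 'a set \<Rightarrow> ('a \<Rightarrow> 'a \<Rightarrow> 'a) \<Rightarrow> 'a \<Rightarrow> ('a \<Rightarrow> 'g) \<Rightarrow> bool" where
  "graded G S m z deg \<longleftrightarrow>
     (\<forall>s\<in>S - {z}. deg s \<in> carrier G) \<and>
     (\<forall>s\<in>S - {z}. \<forall>t\<in>S - {z}. m s t \<noteq> z \<longrightarrow> deg (m s t) = deg s \<otimes>\<^bsub>G\<^esub> deg t)"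

definition component :: "'a set \<Rightarrow> 'a \<Rightarrow> ('a \<Rightarrow> 'g) \<Rightarrow> 'g \<Rightarrow> 'a set" where
  "component S z deg \<alpha> = {s \<in> S - {z}. deg s = \<alpha>} \<union> {z}"

definition setmult :: "('a \<Rightarrow> 'a \<Rightarrow> 'a) \<Rightarrow> 'a set \<Rightarrow> 'a set \<Rightarrow> 'a set" where
  "setmult m A B = {m a b | a b. a \<in> A \<and> b \<in> B}"

definition strongly_graded :: "('g, 'b) monoid_scheme \<Rightarrow> 'a set \<Rightarrow> ('a \<Rightarrow> 'a \<Rightarrow> 'a) \<Rightarrow> 'a \<Rightarrow> ('a \<Rightarrow> 'g) \<Rightarrow> bool" where
  "strongly_graded G S m z deg \<longleftrightarrow> graded G S m z deg \<and>
     (\<forall>\<alpha>\<in>carrier G. \<forall>\<beta>\<in>carrier G.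
        setmult m (component S z deg \<alpha>) (component S z deg \<beta>) = component S z deg (\<alpha> \<otimes>\<^bsub>G\<^esub> \<beta>))"

definition has_local_units :: "'a set \<Rightarrow> ('a \<Rightarrow> 'a \<Rightarrow> 'a) \<Rightarrow> bool" where
  "has_local_units S m \<longleftrightarrow>
     (\<forall>s\<in>S. \<exists>u\<in>S. \<exists>v\<in>S. m u u = u \<and> m v v = v \<and> m u s = s \<and> m s v = s)"

definition regular_sg :: "'a set \<Rightarrow> ('a \<Rightarrow> 'a \<Rightarrow> 'a) \<Rightarrow> bool" where
  "regular_sg T m \<longleftrightarrow> (\<forall>s\<in>T. \<exists>t\<in>T. m (m s t) s = s)"

definition inverse_sg :: "'a set \<Rightarrow> ('a \<Rightarrow> 'a \<Rightarrow> 'a) \<Rightarrow> bool" where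
  "inverse_sg T m \<longleftrightarrow>
     (\<forall>s\<in>T. \<exists>!t. t \<in> T \<and> m (m s t) s = s \<and> m (m t s) t = t)"

end

theory Submission imports Defs begin
locale sgT = fixes T and m :: "'a \<Rightarrow> 'a \<Rightarrow> 'a"
  assumes cl[simp]: "a\<in>T \<Longrightarrow> b\<in>T \<Longrightarrow> m a b \<in> T"
  and as[simp]: "a\<in>T \<Longrightarrow> b\<in>T \<Longrightarrow> c\<in>T \<Longrightarrow> m (m a b) c = m a (m b c)"
begin
lemma ext: "m a b = c \<Longrightarrow> a\<in>T \<Longrightarrow> b\<in>T \<Longrightarrow> w\<in>T \<Longrightarrow> m a (m b w) = m c w"
  by (metis as)

lemma idem_comm:
  assumes inv: "inverse_sg T m" and T: "e\<in>T" "f\<in>T" and ee: "m e e = e" and ff: "m f f = f"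
  shows "m e f = m f e"
proof -
  have ee': "\<And>w. w\<in>T \<Longrightarrow> m e (m e w) = m e w" using ext[OF ee] T by simp
  have ff': "\<And>w. w\<in>T \<Longrightarrow> m f (m f w) = m f w" using ext[OF ff] T by simp
  have uniq: "\<And>s t t'. s\<in>T \<Longrightarrow> t\<in>T \<Longrightarrow> t'\<in>T \<Longrightarrow> m (m s t) s = s \<Longrightarrow> m (m t s) t = t
     \<Longrightarrow> m (m s t') s = s \<Longrightarrow> m (m t' s) t' = t' \<Longrightarrow> t = t'"
    using inv unfolding inverse_sg_def by blast
  have idem: "m (m a b) (m a b) = m a b" if ab: "a\<in>T" "b\<in>T" "m a a = a" "m b b = b" for a b
  proof -
    have aa': "\<And>w. w\<in>T \<Longrightarrow> m a (m a w) = m a w" using ext[OF ab(3)] ab by simp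
    have bb': "\<And>w. w\<in>T \<Longrightarrow> m b (m b w) = m b w" using ext[OF ab(4)] ab by simp
    obtain x where x: "x\<in>T" "m (m (m a b) x) (m a b) = m a b" "m (m x (m a b)) x = x"
      using inv ab unfolding inverse_sg_def by (meson cl)
    have x1: "m a (m b (m x (m a b))) = m a b" using x ab by simp
    have x2: "m x (m a (m b x)) = x" using x ab by simp
    have x1': "\<And>w. w\<in>T \<Longrightarrow> m a (m b (m x (m a (m b w)))) = m a (m b w)"
      using ext[OF x1] x ab by simp
    have x2': "\<And>w. w\<in>T \<Longrightarrow> m x (m a (m b (m x w))) = m x w"
      using ext[OF x2] x ab by simp
    define y where "y = m b (m x a)"
    have y: "y\<in>T" using y_def x ab by simp
    have "m (m (m a b) y) (m a b) = m a b" unfolding y_def using x ab x1 x1' bb' aa' by simp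
    moreover have "m (m y (m a b)) y = y" unfolding y_def using x ab x2 x2' bb' aa' by simp
    ultimately have "y = x" using uniq[of "m a b" y x] y x ab by simp
    then have xx: "m x x = x"
    proof -
      assume yx: "y = x"
      have "m x x = m (m b (m x a)) (m b (m x a))" using yx y_def by simp
      also have "... = m b (m x a)" using x ab x2' by simp
      also have "... = x" using yx y_def by simp
      finally show ?thesis .
    qed
    have "m a b = x"
    proof (rule uniq[of x "m a b" x])
      show "m (m x (m a b)) x = x" using x by simp
      show "m (m (m a b) x) (m a b) = m a b" using x by simp
      show "m (m x x) x = x" using xx by simp
      show "m (m x x) x = x" using xx by simp
    qed (use x ab in simp_all)
    with xx show ?thesis by simp
  qed
  have ef: "m (m e f) (m e f) = m e f" using idem T ee ff by blast
  have fe: "m (m f e) (m f e) = m f e" using idem T ee ff by blast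
  have "m (m (m e f) (m f e)) (m e f) = m e f" 
    using T ee' ff' ef by simp
  moreover have "m (m (m f e) (m e f)) (m f e) = m f e" 
    using T ee' ff' fe by simp
  moreover have "m (m (m e f) (m e f)) (m e f) = m e f" using ef T by simp
  ultimately show ?thesis using uniq[of "m e f" "m e f" "m f e"] T ef by simp
qed

lemma reg_comm_inverse:
  assumes reg: "regular_sg T m"
    and comm: "\<And>e f. e\<in>T \<Longrightarrow> f\<in>T \<Longrightarrow> m e e = e \<Longrightarrow> m f f = f \<Longrightarrow> m e f = m f e"
  shows "inverse_sg T m"
  unfolding inverse_sg_def
proof
  fix s assume s: "s\<in>T"
  obtain t where t: "t\<in>T" "m (m s t) s = s" using reg s unfolding regular_sg_def by blast
  have t1: "m s (m t s) = s" using t s by simp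
  have t1': "\<And>w. w\<in>T \<Longrightarrow> m s (m t (m s w)) = m s w" using ext[OF t1] s t by simp
  define t' where "t' = m t (m s t)"
  have t'T: "t'\<in>T" using t s t'_def by simp
  have A: "m (m s t') s = s" unfolding t'_def using t s t1 t1' by simp
  have B: "m (m t' s) t' = t'" unfolding t'_def using t s t1 t1' by simp
  show "\<exists>!t. t \<in> T \<and> m (m s t) s = s \<and> m (m t s) t = t"
  proof (rule ex1I[of _ t'])
    show "t' \<in> T \<and> m (m s t') s = s \<and> m (m t' s) t' = t'" using t'T A B by blast
    fix y assume y: "y \<in> T \<and> m (m s y) s = s \<and> m (m y s) y = y"
    have idm: "\<And>a. a\<in>T \<Longrightarrow> m (m s a) s = s \<Longrightarrow> m (m a s) (m a s) = m a s \<and> m (m s a) (m s a) = m s a"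
      using s by (metis as cl)
    have yT: "y\<in>T" using y by blast
    have "t' = y"
    proof -
      have ia: "m (m t' s) (m t' s) = m t' s" "m (m s t') (m s t') = m s t'" using idm[of t'] t'T A by auto
      have ib: "m (m y s) (m y s) = m y s" "m (m s y) (m s y) = m s y" using idm[of y] y by auto
      have c1: "m (m t' s) (m y s) = m (m y s) (m t' s)" using comm ia ib y t'T s by simp
      have c2: "m (m s t') (m s y) = m (m s y) (m s t')" using comm ia ib y t'T s by simp
      have "t' = m (m t' s) t'" using B by simp
      also have "... = m (m t' (m (m s y) s)) t'" using y by simp
      also have "... = m (m (m t' s) (m y s)) t'" using yT t'T s by simp
      also have "... = m (m (m y s) (m t' s)) t'" using c1 by simp
      also have "... = m y (m s (m (m t' s) t'))" using yT t'T s by simp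
      also have "... = m y (m s t')" using B by simp
      finally have e1: "t' = m y (m s t')" .
      have "y = m y (m s y)" using y s by (metis as)
      also have "... = m y (m (m (m s t') s) y)" using A by simp
      also have "... = m y (m (m s t') (m s y))" using yT t'T s by simp
      also have "... = m y (m (m s y) (m s t'))" using c2 by simp
      also have "... = m (m (m y s) y) (m s t')" using yT t'T s by simp
      also have "... = m y (m s t')" using y by simp
      finally have e2: "y = m y (m s t')" .
      show ?thesis using e1 e2 by simp
    qed
    then show "y = t'" by simp
  qed
qed
end

theorem proposition2p13:
  fixes G :: "('g, 'b) monoid_scheme"
    and S :: "'a set" and m :: "'a \<Rightarrow> 'a \<Rightarrow> 'a" and z :: 'a and deg :: "'a \<Rightarrow> 'g"
  assumes "group G"
    and "semigroup0 S m z"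
    and "strongly_graded G S m z deg"
    and "has_local_units S m"
  shows "(regular_sg S m \<longleftrightarrow> regular_sg (component S z deg \<one>\<^bsub>G\<^esub>) m)
       \<and> (inverse_sg S m \<longleftrightarrow> inverse_sg (component S z deg \<one>\<^bsub>G\<^esub>) m)"
proof -
  interpret G: group G by fact
  have clS: "\<And>a b. a\<in>S \<Longrightarrow> b\<in>S \<Longrightarrow> m a b \<in> S" and asS: "\<And>a b c. a\<in>S \<Longrightarrow> b\<in>S \<Longrightarrow> c\<in>S \<Longrightarrow> m (m a b) c = m a (m b c)"
    and zS: "z \<in> S" and zl: "\<And>s. s\<in>S \<Longrightarrow> m z s = z" and zr: "\<And>s. s\<in>S \<Longrightarrow> m s z = z"
    using assms(2) unfolding semigroup0_def by auto
  interpret S: sgT S m using clS asS by unfold_locales auto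
  have degc: "\<And>s. s\<in>S \<Longrightarrow> s \<noteq> z \<Longrightarrow> deg s \<in> carrier G"
   and degm: "\<And>s t. s\<in>S \<Longrightarrow> t\<in>S \<Longrightarrow> s\<noteq>z \<Longrightarrow> t\<noteq>z \<Longrightarrow> m s t \<noteq> z \<Longrightarrow> deg (m s t) = deg s \<otimes>\<^bsub>G\<^esub> deg t"
    using assms(3) unfolding strongly_graded_def graded_def by auto
  have sgr: "\<And>\<alpha> \<beta>. \<alpha>\<in>carrier G \<Longrightarrow> \<beta>\<in>carrier G \<Longrightarrow> setmult m (component S z deg \<alpha>) (component S z deg \<beta>) = component S z deg (\<alpha> \<otimes>\<^bsub>G\<^esub> \<beta>)"
    using assms(3) unfolding strongly_graded_def by auto
  define E where "E = component S z deg \<one>\<^bsub>G\<^esub>"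
  have memE: "\<And>s. s \<in> E \<longleftrightarrow> s = z \<or> (s \<in> S \<and> s \<noteq> z \<and> deg s = \<one>\<^bsub>G\<^esub>)"
    unfolding E_def component_def by auto
  have ES: "E \<subseteq> S" using memE zS by auto
  have clE: "m a b \<in> E" if "a\<in>E" "b\<in>E" for a b
  proof -
    have ab: "a\<in>S" "b\<in>S" using that ES by auto
    show ?thesis
    proof (cases "a = z \<or> b = z \<or> m a b = z")
      case True then show ?thesis using ab zl zr memE by auto
    next
      case False then show ?thesis using that memE degm[of a b] ab clS by auto
    qed
  qed
  interpret E: sgT E m
  proof
    fix a b c assume "a\<in>E" "b\<in>E" "c\<in>E"
    then show "m (m a b) c = m a (m b c)" using ES asS by blast
  qed (rule clE)
  have degone: "t \<in> E" if st: "s\<in>S" "t\<in>S" "s\<noteq>z" "deg s = \<one>\<^bsub>G\<^esub>" "m (m s t) s = s" for s t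
  proof -
    have tz: "t \<noteq> z" using st zl zr by auto
    have stz: "m s t \<noteq> z" using st zl by auto
    have "deg s = deg (m s t) \<otimes>\<^bsub>G\<^esub> deg s" using degm[of "m s t" s] st stz clS by simp
    also have "... = deg t" using degm[of s t] st tz stz degc by simp
    finally show ?thesis using memE st tz by simp
  qed
  have idemE: "e \<in> E" if "e\<in>S" "m e e = e" for e
  proof (cases "e = z")
    case True then show ?thesis using memE by simp
  next
    case False
    have "deg e = deg e \<otimes>\<^bsub>G\<^esub> deg e" using degm[of e e] that False by simp
    then show ?thesis using memE that False degc by (metis G.l_cancel_one')
  qed
  have zz: "m (m z z) z = z" using zS zl by simp
  have R1: "regular_sg E m" if rS: "regular_sg S m"
    unfolding regular_sg_def
  proof
    fix s assume s: "s\<in>E"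
    show "\<exists>t\<in>E. m (m s t) s = s"
    proof (cases "s = z")
      case True
      have "z \<in> E" using memE by blast
      then show ?thesis using zz True by blast
    next
      case False
      have "s \<in> S" using s ES by blast
      then obtain t where "t\<in>S" "m (m s t) s = s" using rS unfolding regular_sg_def by blast
      moreover have "s\<in>S" "deg s = \<one>\<^bsub>G\<^esub>" using s False memE[of s] by blast+
      ultimately show ?thesis using degone[of s t] False by blast
    qed
  qed
  have R2: "regular_sg S m" if rE: "regular_sg E m"
    unfolding regular_sg_def
  proof
    fix s assume s: "s\<in>S"
    show "\<exists>t\<in>S. m (m s t) s = s"
    proof (cases "s = z")
      case True then show ?thesis using zz zS by blast
    next
      case False
      obtain u where u: "u\<in>S" "m u u = u" "m u s = s" using assms(4) s unfolding has_local_units_def by blast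
      have uE: "u \<in> E" using idemE u by simp
      define \<alpha> where "\<alpha> = deg s"
      have \<alpha>: "\<alpha> \<in> carrier G" using degc s False \<alpha>_def by simp
      have "u \<in> setmult m (component S z deg \<alpha>) (component S z deg (inv\<^bsub>G\<^esub> \<alpha>))"
        using sgr[of \<alpha> "inv\<^bsub>G\<^esub> \<alpha>"] \<alpha> uE E_def by simp
      then obtain a b where ab: "a \<in> component S z deg \<alpha>" "b \<in> component S z deg (inv\<^bsub>G\<^esub> \<alpha>)" "u = m a b"
        unfolding setmult_def by blast
      have aS: "a\<in>S" and bS: "b\<in>S" using ab zS unfolding component_def by auto
      have bsE: "m b s \<in> E"
      proof (cases "b = z \<or> m b s = z")
        case True then have "m b s = z" using zl s by auto
        then show ?thesis using memE by blast
      next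
        case False
        then have "deg b = inv\<^bsub>G\<^esub> \<alpha>" using ab unfolding component_def by auto
        then show ?thesis using False degm[of b s] bS s \<open>s\<noteq>z\<close> \<alpha> \<alpha>_def memE clS by simp
      qed
      obtain x where x: "x\<in>E" "m (m (m b s) x) (m b s) = m b s" using rE bsE unfolding regular_sg_def by blast
      have xS: "x\<in>S" using x ES by auto
      have sab: "s = m a (m b s)" using u ab aS bS s by simp
      have "m (m (m a (m b s)) (m x b)) s = m a (m (m (m b s) x) (m b s))" using aS bS xS s
        by simp
      then have "m (m s (m x b)) s = m a (m (m (m b s) x) (m b s))" unfolding sab[symmetric] .
      also have "... = s" using x sab by simp
      finally show ?thesis using xS bS clS by blast
    qed
  qed
  have I1: "inverse_sg E m" if iS: "inverse_sg S m"
    unfolding inverse_sg_def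
  proof
    fix s assume s: "s\<in>E"
    then have sS: "s\<in>S" using ES by auto
    obtain t where t: "t\<in>S" "m (m s t) s = s" "m (m t s) t = t"
      and un: "\<And>y. y\<in>S \<Longrightarrow> m (m s y) s = s \<Longrightarrow> m (m y s) y = y \<Longrightarrow> y = t"
      using iS sS unfolding inverse_sg_def by metis
    have tE: "t \<in> E"
    proof (cases "s = z")
      case True then show ?thesis using un[of z] zz zS memE by auto
    next
      case False then show ?thesis using degone[of s t] t sS s memE by auto
    qed
    show "\<exists>!t. t \<in> E \<and> m (m s t) s = s \<and> m (m t s) t = t"
      using tE t un ES by blast
  qed
  have I2: "inverse_sg S m" if iE: "inverse_sg E m"
  proof (rule S.reg_comm_inverse)
    show "regular_sg S m" using R2 iE unfolding inverse_sg_def regular_sg_def by blast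
    fix e f assume "e\<in>S" "f\<in>S" "m e e = e" "m f f = f"
    then show "m e f = m f e" using E.idem_comm[OF iE] idemE by simp
  qed
  show ?thesis using R1 R2 I1 I2 E_def by blast
qed
end
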